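(* Let $X$ be a nonnegative, absolutely continuous random variable with distribution function $F$, survival function $\bar F=1-F$, finite nonzero mean, quantile function $Q(u)=\inf\{x\in\mathbb R:F(x)\ge u\}$, $0<u<1$, satisfying $Q(0):=\lim_{u\to0}Q(u)=0$, and with $Q$ differentiable on $(0,1)$ with quantile density $q=Q'$. Let $h,l:[0,1]\to[0,1]$ be distortion functions that are strictly increasing and differentiable on $(0,1)$ with positive derivatives, such that $h(x)\le l(x)$ for all $0<x<1$ and $E[X_h]<E[X_l]<+\infty$, where for a distortion function $k$, $X_k$ denotes the random variable with survival function $k(\bar F(x))$, so that $E[X_k]=\int_0^\infty k(\bar F(s))\,ds$ and $X_k$ has quantile function $Q_k(u)=Q(1-k^{-1}(1-u))$. Let $g:(0,1)\to\mathbb R$ be differentiable with $g'\cdot Q_h$ and $g'\cdot Q_l$ integrable on $(0,1)$, and let $U$ be uniformly distributed on $(0,1)$. Then $$E\left[\left(\frac{q(1-l^{-1}(1-U))}{l'(l^{-1}(1-U))}-\frac{q(1-h^{-1}(1-U))}{h'(h^{-1}(1-U))}\right)(g(1)-g(U))\right]=E[g'(Z^L)]\,(E[X_l]-E[X_h]),$$ where $Z^L$ is a random variable with density $$f_{Z^L}(x)=\frac{Q(1-l^{-1}(1-x))-Q(1-h^{-1}(1-x))}{E[X_l]-E[X_h]},\qquad 0<x<1.$$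
   Context: A distortion function is a continuous, nondecreasing, piecewise differentiable function $h:[0,1]\to[0,1]$ with $h(0)=0$, $h(1)=1$. $g(1)$ denotes $\lim_{u\to1}g(u)$ where needed. *)

theory Defs
  imports "HOL-Probability.Probability"
begin

definition piecewise_differentiable_01 :: "(real \<Rightarrow> real) \<Rightarrow> bool" where
  "piecewise_differentiable_01 h \<longleftrightarrow>
     (\<exists>S. finite S \<and> (\<forall>x\<in>{0..1} - S. h differentiable (at x within {0..1})))"

definition distortion :: "(real \<Rightarrow> real) \<Rightarrow> bool" where
  "distortion h \<longleftrightarrow> continuous_on {0..1} h \<and> mono_on {0..1} h
     \<and> piecewise_differentiable_01 h
     \<and> h ` {0..1} \<subseteq> {0..1} \<and> h 0 = 0 \<and> h 1 = 1"

definition quantile :: "(real \<Rightarrow> real) \<Rightarrow> real \<Rightarrow> real" where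
  "quantile F u = Inf {x. u \<le> F x}"

definition distorted_mean :: "(real \<Rightarrow> real) \<Rightarrow> (real \<Rightarrow> real) \<Rightarrow> real" where
  "distorted_mean k F = (LBINT s:{0..}. k (1 - F s))"

end

theory Submission
  imports Defs
begin


lemma P_nonneg:
  fixes P :: "real \<Rightarrow> real"
  assumes mono: "mono_on {0<..<1} P" and lim0: "(P \<longlongrightarrow> 0) (at_right 0)"
    and u: "0 < u" "u < 1"
  shows "0 \<le> P u"
proof (rule tendsto_upperbound[OF lim0])
  show "\<forall>\<^sub>F x in at_right 0. P x \<le> P u"
    unfolding eventually_at_right_field
    using u by (intro exI[of _ u]) (auto intro!: mono_onD[OF mono])
qed simp

lemma deriv_nonneg:
  fixes P :: "real \<Rightarrow> real"
  assumes mono: "mono_on {0<..<1} P" and d: "(P has_real_derivative D) (at u)"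
    and u: "0 < u" "u < 1"
  shows "0 \<le> D"
proof (rule ccontr)
  assume "\<not> 0 \<le> D"
  then obtain e where e: "e > 0" "\<forall>h>0. h < e \<longrightarrow> P u > P (u + h)"
    using DERIV_neg_dec_right[OF d] by force
  define h where "h = min (e/2) ((1-u)/2)"
  have "h > 0" "h < e" using e u by (auto simp: h_def)
  have "h \<le> (1-u)/2" unfolding h_def by (rule min.cobounded2)
  then have "u + h < 1" using u by (simp add: field_simps)
  have "P u > P (u+h)" using e \<open>h>0\<close> \<open>h<e\<close> by auto
  moreover have "P u \<le> P (u+h)" using mono u \<open>h>0\<close> \<open>u+h<1\<close>
    by (intro mono_onD[OF mono]) auto
  ultimately show False by simp
qed

lemma deriv_zero:
  fixes P :: "real \<Rightarrow> real"
  assumes mono: "mono_on {0<..<1} P" and lim0: "(P \<longlongrightarrow> 0) (at_right 0)"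
    and d: "(P has_real_derivative D) (at u)"
    and u: "0 < u" "u < 1" and z: "P u = 0"
  shows "D = 0"
proof (rule DERIV_local_min[OF d])
  show "0 < min u (1-u)" using u by simp
  show "\<forall>y. \<bar>u - y\<bar> < min u (1 - u) \<longrightarrow> P u \<le> P y"
    using P_nonneg[OF mono lim0] z by auto
qed

lemma deriv_meas:
  fixes P p :: "real \<Rightarrow> real"
  assumes dP: "\<And>u. 0 < u \<Longrightarrow> u < 1 \<Longrightarrow> (P has_real_derivative p u) (at u)"
  shows "(\<lambda>x. indicator {0<..<1} x * p x) \<in> borel_measurable borel"
proof -
  have cont: "continuous_on {0<..<1} P"
    by (intro continuous_at_imp_continuous_on ballI) (metis DERIV_isCont dP greaterThanLessThan_iff)
  define Pt where "Pt x = indicator {0<..<1} x * P x" for x :: real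
  have mPt[measurable]: "Pt \<in> borel_measurable borel"
    unfolding Pt_def using borel_measurable_continuous_on_indicator[OF _ cont] by simp
  define h where "h n = inverse (real (Suc n))" for n
  have hlim: "filterlim h (at 0) sequentially"
    unfolding filterlim_at h_def using LIMSEQ_inverse_real_of_nat by auto
  define U where "U n x = indicator {0<..<1} x * ((Pt (x + h n) - Pt x) / h n)" for n x
  show ?thesis
  proof (rule borel_measurable_LIMSEQ_real[where u=U])
    show "U n \<in> borel_measurable borel" for n unfolding U_def by measurable
    fix x :: real
    show "(\<lambda>n. U n x) \<longlonglongrightarrow> indicator {0<..<1} x * p x"
    proof (cases "0 < x \<and> x < 1")
      case False then show ?thesis by (auto simp: U_def indicator_def)
    next
      case True
      have d: "((\<lambda>t. (P (x + t) - P x) / t) \<longlongrightarrow> p x) (at 0)"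
        using dP[of x] True by (simp add: DERIV_def)
      have l: "(\<lambda>n. (P (x + h n) - P x) / h n) \<longlonglongrightarrow> p x"
        by (rule filterlim_compose[OF d hlim])
      have ev: "\<forall>\<^sub>F n in sequentially. (P (x + h n) - P x) / h n = U n x"
      proof -
        have "(h \<longlongrightarrow> 0) sequentially" using hlim by (simp add: filterlim_at)
        then have "\<forall>\<^sub>F n in sequentially. h n < 1 - x" using True by (intro order_tendstoD) auto
        then show ?thesis
        proof eventually_elim
          case (elim n)
          have "h n > 0" by (simp add: h_def)
          then show ?case using elim True by (auto simp: U_def Pt_def indicator_def)
        qed
      qed
      show ?thesis using Lim_transform_eventually[OF l ev] True by simp
    qed
  qed
qed

lemma nonneg_has_integral_lborel:
  fixes f :: "real \<Rightarrow> real"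
  assumes "(f has_integral I) S" "\<And>x. x \<in> S \<Longrightarrow> 0 \<le> f x"
    and m: "(\<lambda>x. indicator S x * f x) \<in> borel_measurable borel"
  shows "set_integrable lborel S f" "(LBINT x:S. f x) = I"
proof -
  have "set_integrable lebesgue S f"
    using nonnegative_absolutely_integrable_1[of f S] assms(1,2) by (auto simp: integrable_on_def)
  then show si: "set_integrable lborel S f"
    unfolding set_integrable_def using integrable_completion[of "\<lambda>x. indicator S x *\<^sub>R f x" lborel] m
    by simp
  show "(LBINT x:S. f x) = I"
    using set_borel_integral_eq_integral(2)[OF si] assms(1) by (simp add: integral_unique)
qed

lemma ftc_p:
  fixes P p :: "real \<Rightarrow> real"
  assumes mono: "mono_on {0<..<1} P" and lim0: "(P \<longlongrightarrow> 0) (at_right 0)"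
    and dP: "\<And>u. 0 < u \<Longrightarrow> u < 1 \<Longrightarrow> (P has_real_derivative p u) (at u)"
    and t: "0 < t" "t < 1"
  shows "set_integrable lborel {0<..t} p" "(LBINT x:{0<..t}. p x) = P t"
proof -
  have cont: "continuous_on {0<..<1} P"
    by (intro continuous_at_imp_continuous_on ballI) (metis DERIV_isCont dP greaterThanLessThan_iff)
  have pnn: "0 \<le> p x" if "0 < x" "x < 1" for x
    using deriv_nonneg[OF mono dP[OF that] that] .
  have mp[measurable]: "(\<lambda>x. indicator {0<..<1} x * p x) \<in> borel_measurable borel"
    using deriv_meas[of P p] dP by blast
  have mS: "(\<lambda>x. indicator S x * p x) \<in> borel_measurable borel" if "S \<subseteq> {0<..<1}" "S \<in> sets borel" for S
  proof -
    have "(\<lambda>x. indicator S x * (indicator {0<..<1} x * p x)) \<in> borel_measurable borel"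
      using that by measurable
    moreover have "indicator S x * (indicator {0<..<1} x * p x) = indicator S x * p x" for x
      using that by (auto simp: indicator_def)
    ultimately show ?thesis by simp
  qed
  have step: "set_integrable lborel {s..t} p \<and> (LBINT x:{s..t}. p x) = P t - P s" if s: "0 < s" "s \<le> t" for s
  proof -
    have "(p has_integral P t - P s) {s..t}"
    proof (rule fundamental_theorem_of_calculus_interior)
      show "continuous_on {s..t} P" using s t by (intro continuous_on_subset[OF cont]) auto
      show "(P has_vector_derivative p x) (at x)" if "x \<in> {s<..<t}" for x
        using dP[of x] that s t by (simp add: has_real_derivative_iff_has_vector_derivative)
    qed fact
    moreover have "0 \<le> p x" if "x \<in> {s..t}" for x using that s t pnn by auto
    moreover have "(\<lambda>x. indicator {s..t} x * p x) \<in> borel_measurable borel"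
      using s t by (intro mS) auto
    ultimately show ?thesis using nonneg_has_integral_lborel by blast
  qed
  define s where "s n = t / real (Suc (Suc n))" for n
  have s_pos: "0 < s n" for n using t by (simp add: s_def)
  have s_le: "s n \<le> t" for n using t by (simp add: s_def field_simps)
  have s_dec: "s (Suc n) \<le> s n" for n using t by (simp add: s_def frac_le)
  have s_lim: "s \<longlonglongrightarrow> 0"
  proof -
    have "(\<lambda>n. t * inverse (real (Suc (Suc n)))) \<longlonglongrightarrow> t * 0"
      by (intro tendsto_mult tendsto_const LIMSEQ_inverse_real_of_nat LIMSEQ_Suc)
    moreover have "s = (\<lambda>n. t * inverse (real (Suc (Suc n))))"
      by (rule ext) (simp add: s_def divide_inverse)
    ultimately show ?thesis by simp
  qed
  define f where "f n x = indicator {s n..t} x * p x" for n x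
  have fn_eq: "f n = (\<lambda>x. indicator {s n..t} x * p x)" for n by (rule ext) (simp add: f_def)
  have fnn: "0 \<le> f n x" for n x
    using pnn s_pos[of n] t by (auto simp: f_def indicator_def)
  have mono_f: "mono (\<lambda>n. f n x)" for x
  proof (rule incseq_SucI)
    fix n show "f n x \<le> f (Suc n) x"
      using pnn s_pos[of "Suc n"] s_dec[of n] t by (auto simp: f_def indicator_def)
  qed
  have int_f: "integrable lborel (f n)" for n
    using step[OF s_pos[of n] s_le[of n]] by (simp add: set_integrable_def fn_eq)
  have lim_f: "(\<lambda>n. f n x) \<longlonglongrightarrow> indicator {0<..t} x * p x" for x
  proof (cases "0 < x \<and> x \<le> t")
    case False
    then have "f n x = 0" for n using s_pos[of n] by (auto simp: f_def indicator_def)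
    then show ?thesis using False by (auto simp: indicator_def)
  next
    case True
    have "\<forall>\<^sub>F n in sequentially. s n < x" using s_lim True by (intro order_tendstoD) auto
    then have "\<forall>\<^sub>F n in sequentially. indicator {0<..t} x * p x = f n x"
      by eventually_elim (use True in \<open>auto simp: f_def indicator_def\<close>)
    then show ?thesis by (rule Lim_transform_eventually[OF tendsto_const])
  qed
  have ilim: "(\<lambda>n. integral\<^sup>L lborel (f n)) \<longlonglongrightarrow> P t - 0"
  proof -
    have "integral\<^sup>L lborel (f n) = P t - P (s n)" for n
      using step[OF s_pos[of n] s_le[of n]] by (simp add: set_lebesgue_integral_def fn_eq)
    moreover have "(\<lambda>n. P (s n)) \<longlonglongrightarrow> 0"
    proof (rule filterlim_compose[OF lim0])
      show "filterlim s (at_right 0) sequentially"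
        using s_lim s_pos by (intro tendsto_imp_filterlim_at_right always_eventually) auto
    qed
    ultimately show ?thesis using tendsto_diff[OF tendsto_const[of "P t"], of "\<lambda>n. P (s n)" 0] by simp
  qed
  have mu: "(\<lambda>x. indicator {0<..t} x * p x) \<in> borel_measurable borel"
    using t by (intro mS) auto
  have "integrable lborel (\<lambda>x. indicator {0<..t} x * p x)"
       "integral\<^sup>L lborel (\<lambda>x. indicator {0<..t} x * p x) = P t - 0"
    using integral_monotone_convergence_nonneg[of lborel f, OF int_f _ _ _ ilim, of "\<lambda>x. indicator {0<..t} x * p x"]
      mono_f fnn lim_f mu by auto
  then show "set_integrable lborel {0<..t} p" "(LBINT x:{0<..t}. p x) = P t"
    by (simp_all add: set_integrable_def set_lebesgue_integral_def)
qed

lemma g_tail: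
  fixes P p g g' :: "real \<Rightarrow> real"
  assumes mono: "mono_on {0<..<1} P"
    and dP: "\<And>u. 0 < u \<Longrightarrow> u < 1 \<Longrightarrow> (P has_real_derivative p u) (at u)"
    and dg: "\<And>u. 0 < u \<Longrightarrow> u < 1 \<Longrightarrow> (g has_real_derivative g' u) (at u)"
    and int: "set_integrable lborel {0<..<1} (\<lambda>u. g' u * P u)"
    and u: "0 < u" "u < 1" and Pu: "P u > 0"
    and \<gamma>_def: "\<gamma> = (\<lambda>t. (indicator {0<..<1} t * (g' t * P t)) / (indicator {0<..<1} t * P t))"
  shows "set_integrable lborel {u..<1} \<gamma>" "(g \<longlongrightarrow> g u + (LBINT t:{u..<1}. \<gamma> t)) (at_left 1)"
proof -
  have cont: "continuous_on {0<..<1} P"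
    by (intro continuous_at_imp_continuous_on ballI) (metis DERIV_isCont dP greaterThanLessThan_iff)
  have mnum: "(\<lambda>t. indicator {0<..<1} t * (g' t * P t)) \<in> borel_measurable borel"
    using borel_measurable_integrable[OF int[unfolded set_integrable_def]] by simp
  have mden: "(\<lambda>t. indicator {0<..<1} t * P t) \<in> borel_measurable borel"
    using borel_measurable_continuous_on_indicator[OF _ cont] by simp
  have mg[measurable]: "\<gamma> \<in> borel_measurable borel"
    unfolding \<gamma>_def using mnum mden by (rule borel_measurable_divide)
  have Pge: "P t \<ge> P u" if "u \<le> t" "t < 1" for t
    using that u by (intro mono_onD[OF mono]) auto
  have geq: "\<gamma> t = g' t" if "u \<le> t" "t < 1" for t
    using Pge[OF that] Pu that u by (simp add: \<gamma>_def indicator_def)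
  show si: "set_integrable lborel {u..<1} \<gamma>"
    unfolding set_integrable_def
  proof (rule Bochner_Integration.integrable_bound)
    show "integrable lborel (\<lambda>t. (1 / P u) * (indicator {0<..<1} t * (g' t * P t)))"
      using int unfolding set_integrable_def by simp
    show "(\<lambda>t. indicator {u..<1} t *\<^sub>R \<gamma> t) \<in> borel_measurable lborel" by simp
    show "AE t in lborel. norm (indicator {u..<1} t *\<^sub>R \<gamma> t) \<le> norm ((1 / P u) * (indicator {0<..<1} t * (g' t * P t)))"
    proof (rule AE_I2)
      fix t
      show "norm (indicator {u..<1} t *\<^sub>R \<gamma> t) \<le> norm ((1 / P u) * (indicator {0<..<1} t * (g' t * P t)))"
      proof (cases "u \<le> t \<and> t < 1")
        case True
        have "\<bar>g' t\<bar> * P u \<le> \<bar>g' t\<bar> * P t" using Pge True by (intro mult_left_mono) auto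
        then have "\<bar>g' t\<bar> \<le> \<bar>g' t\<bar> * P t / P u" using Pu by (simp add: field_simps)
        also have "\<dots> = \<bar>g' t * P t\<bar> / P u"
        proof -
          have "P t > 0" using Pge[of t] True Pu by linarith
          then show ?thesis by (simp add: abs_mult)
        qed
        finally show ?thesis using True u geq[of t] Pu by (simp add: indicator_def abs_mult)
      qed (auto simp: indicator_def)
    qed
  qed
  have eqb: "g b = g u + (LBINT t:{u..b}. \<gamma> t)" if b: "u < b" "b < 1" for b
  proof -
    have "(g' has_integral g b - g u) {u..b}"
    proof (rule fundamental_theorem_of_calculus_interior)
      show "continuous_on {u..b} g"
        using u b by (intro continuous_at_imp_continuous_on ballI) (metis DERIV_isCont dg atLeastAtMost_iff order_less_le_trans order_le_less_trans)
      show "(g has_vector_derivative g' x) (at x)" if "x \<in> {u<..<b}" for x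
        using dg[of x] that u b by (simp add: has_real_derivative_iff_has_vector_derivative)
    qed (use b in auto)
    then have hi: "(\<gamma> has_integral g b - g u) {u..b}"
      by (rule has_integral_eq[rotated]) (use geq b in auto)
    have sib: "set_integrable lborel {u..b} \<gamma>"
      by (rule set_integrable_subset[OF si]) (use b in auto)
    have "(LBINT t:{u..b}. \<gamma> t) = g b - g u"
      using set_borel_integral_eq_integral(2)[OF sib] integral_unique[OF hi] by simp
    then show ?thesis by simp
  qed
  have lim: "((\<lambda>b. LBINT t:{u..b}. \<gamma> t) \<longlongrightarrow> (LBINT t:{u..<1}. \<gamma> t)) (at_left 1)"
    by (rule tendsto_set_lebesgue_integral_at_left) (use u si in auto)
  have ev: "\<forall>\<^sub>F b in at_left 1. g u + (LBINT t:{u..b}. \<gamma> t) = g b"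
    unfolding eventually_at_left_field using u eqb by (intro exI[of _ u]) auto
  show "(g \<longlongrightarrow> g u + (LBINT t:{u..<1}. \<gamma> t)) (at_left 1)"
    using Lim_transform_eventually[OF tendsto_add[OF tendsto_const lim] ev] .
qed

lemma core:
  fixes P p g g' :: "real \<Rightarrow> real" and G :: real
  assumes mono: "mono_on {0<..<1} P" and lim0: "(P \<longlongrightarrow> 0) (at_right 0)"
    and dP: "\<And>u. 0 < u \<Longrightarrow> u < 1 \<Longrightarrow> (P has_real_derivative p u) (at u)"
    and dg: "\<And>u. 0 < u \<Longrightarrow> u < 1 \<Longrightarrow> (g has_real_derivative g' u) (at u)"
    and int: "set_integrable lborel {0<..<1} (\<lambda>u. g' u * P u)"
    and G: "G = Lim (at_left 1) g"
  shows "set_integrable lborel {0<..<1} (\<lambda>u. p u * (G - g u))"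
    "(LBINT u:{0<..<1}. p u * (G - g u)) = (LBINT u:{0<..<1}. g' u * P u)"
proof -
  define \<gamma> where "\<gamma> = (\<lambda>t. (indicator {0<..<1} t * (g' t * P t)) / (indicator {0<..<1} t * P t))"
  define pt where "pt u = indicator {0<..<1} u * p u" for u
  have cont: "continuous_on {0<..<1} P"
    by (intro continuous_at_imp_continuous_on ballI) (metis DERIV_isCont dP greaterThanLessThan_iff)
  have mnum: "(\<lambda>t. indicator {0<..<1} t * (g' t * P t)) \<in> borel_measurable borel"
    using borel_measurable_integrable[OF int[unfolded set_integrable_def]] by simp
  have mden: "(\<lambda>t. indicator {0<..<1} t * P t) \<in> borel_measurable borel"
    using borel_measurable_continuous_on_indicator[OF _ cont] by simp
  have mg: "\<gamma> \<in> borel_measurable borel"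
    unfolding \<gamma>_def using mnum mden by (rule borel_measurable_divide)
  then have mg'[measurable]: "\<gamma> \<in> borel_measurable lborel" by simp
  have mp: "pt \<in> borel_measurable borel"
    unfolding pt_def[abs_def] using deriv_meas[of P p] dP by blast
  then have mp'[measurable]: "pt \<in> borel_measurable lborel" by simp
  have Pnn: "0 \<le> P u" if "0 < u" "u < 1" for u using P_nonneg[OF mono lim0 that] .
  have pnn: "0 \<le> p u" if "0 < u" "u < 1" for u using deriv_nonneg[OF mono dP[OF that] that] .
  have p0: "p u = 0" if "0 < u" "u < 1" "P u = 0" for u
    using deriv_zero[OF mono lim0 dP[OF that(1,2)] that] .
  have \<gamma>P: "\<gamma> t * P t = g' t * P t" if "0 < t" "t < 1" for t
    using that by (cases "P t = 0") (auto simp: \<gamma>_def indicator_def)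
  have tailG: "p u * (G - g u) = p u * (LBINT t:{u..<1}. \<gamma> t)" if u: "0 < u" "u < 1" for u
  proof (cases "P u = 0")
    case True then show ?thesis using p0[OF u] by simp
  next
    case False
    then have Pu: "P u > 0" using Pnn[OF u] by simp
    have "(g \<longlongrightarrow> g u + (LBINT t:{u..<1}. \<gamma> t)) (at_left 1)"
      using g_tail(2)[OF mono dP dg int u Pu \<gamma>_def] .
    then have "G = g u + (LBINT t:{u..<1}. \<gamma> t)"
      unfolding G by (intro tendsto_Lim) (simp_all add: trivial_limit_at_left_real)
    then show ?thesis by simp
  qed
  define K where "K t u = (if 0 < u \<and> u \<le> t \<and> t < 1 then \<gamma> t * pt u else 0)" for t u
  have mK[measurable]: "(\<lambda>(t, u). K t u) \<in> borel_measurable (lborel \<Otimes>\<^sub>M lborel)"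
    unfolding K_def by measurable
  have Kt: "K t u = indicator {0<..<1} t * (\<gamma> t * (indicator {0<..t} u * p u))" for t u
    by (auto simp: K_def pt_def indicator_def)
  have Ku: "K t u = indicator {0<..<1} u * (p u * (indicator {u..<1} t * \<gamma> t))" for t u
    by (auto simp: K_def pt_def indicator_def)
  have Knorm: "norm (K t u) = indicator {0<..<1} t * (\<bar>\<gamma> t\<bar> * (indicator {0<..t} u * p u))" for t u
    using pnn by (auto simp: K_def pt_def indicator_def abs_mult)
  have inner_t: "(\<integral>u. K t u \<partial>lborel) = indicator {0<..<1} t * (g' t * P t)" for t
  proof (cases "0 < t \<and> t < 1")
    case True
    have "(\<integral>u. K t u \<partial>lborel) = \<gamma> t * (LBINT u:{0<..t}. p u)"
      using True by (simp add: Kt set_lebesgue_integral_def)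
    also have "\<dots> = \<gamma> t * P t" using ftc_p(2)[OF mono lim0 dP] True by simp
    finally show ?thesis using \<gamma>P True by simp
  qed (auto simp: Kt)
  have inner_norm: "(\<integral>u. norm (K t u) \<partial>lborel) = \<bar>indicator {0<..<1} t * (g' t * P t)\<bar>" for t
  proof (cases "0 < t \<and> t < 1")
    case True
    have "(\<integral>u. norm (K t u) \<partial>lborel) = \<bar>\<gamma> t\<bar> * (LBINT u:{0<..t}. p u)"
      using True by (simp add: Knorm[simplified] set_lebesgue_integral_def)
    also have "\<dots> = \<bar>\<gamma> t\<bar> * P t" using ftc_p(2)[OF mono lim0 dP] True by simp
    also have "\<dots> = \<bar>\<gamma> t * P t\<bar>" using Pnn True by (simp add: abs_mult)
    finally show ?thesis using \<gamma>P True by simp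
  qed (auto simp: Knorm[simplified])
  have inner_u: "(\<integral>t. K t u \<partial>lborel) = indicator {0<..<1} u * (p u * (G - g u))" for u
  proof (cases "0 < u \<and> u < 1")
    case True
    have "(\<integral>t. K t u \<partial>lborel) = p u * (LBINT t:{u..<1}. \<gamma> t)"
      using True by (simp add: Ku set_lebesgue_integral_def)
    then show ?thesis using tailG[of u] True by (simp add: indicator_def) (metis eq_commute)
  qed (auto simp: Ku)
  have intK: "integrable (lborel \<Otimes>\<^sub>M lborel) (\<lambda>(t, u). K t u)"
  proof (rule lborel_pair.Fubini_integrable)
    show "integrable lborel (\<lambda>t. \<integral>u. norm ((\<lambda>(t, u). K t u) (t, u)) \<partial>lborel)"
      using integrable_abs[OF int[unfolded set_integrable_def]] by (simp add: inner_norm[simplified])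
    show "AE t in lborel. integrable lborel (\<lambda>u. (\<lambda>(t, u). K t u) (t, u))"
    proof (rule AE_I2)
      fix t
      show "integrable lborel (\<lambda>u. (\<lambda>(t, u). K t u) (t, u))"
      proof (cases "0 < t \<and> t < 1")
        case True
        then have "integrable lborel (\<lambda>u. indicator {0<..t} u * p u)"
          using ftc_p(1)[OF mono lim0 dP, of t] by (simp add: set_integrable_def)
        then show ?thesis using True by (simp add: Kt)
      qed (simp add: Kt)
    qed
  qed simp
  have "integrable lborel (\<lambda>u. \<integral>t. K t u \<partial>lborel)"
    using lborel_pair.integrable_snd[OF intK] .
  then show "set_integrable lborel {0<..<1} (\<lambda>u. p u * (G - g u))"
    by (simp add: inner_u set_integrable_def)
  have "(\<integral>u. (\<integral>t. K t u \<partial>lborel) \<partial>lborel) = (\<integral>t. (\<integral>u. K t u \<partial>lborel) \<partial>lborel)"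
    using lborel_pair.Fubini_integral[OF intK] .
  then show "(LBINT u:{0<..<1}. p u * (G - g u)) = (LBINT u:{0<..<1}. g' u * P u)"
    by (simp add: inner_u inner_t set_lebesgue_integral_def)
qed



lemma quantile_mono:
  assumes "real_distribution N" and uv: "0 < u" "u \<le> v" "v < 1"
  shows "quantile (cdf N) u \<le> quantile (cdf N) v"
proof -
  interpret real_distribution N by fact
  have "\<forall>\<^sub>F x in at_top. cdf N x > v" using cdf_lim_at_top_prob uv by (intro order_tendstoD) auto
  then obtain x0 where "v < cdf N x0" unfolding eventually_at_top_linorder by auto
  then have ne: "{x. v \<le> cdf N x} \<noteq> {}" by (auto intro!: exI[of _ x0])
  have "\<forall>\<^sub>F x in at_bot. cdf N x < u" using cdf_lim_at_bot uv by (intro order_tendstoD) auto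
  then obtain N0 where N0: "\<And>x. x \<le> N0 \<Longrightarrow> cdf N x < u" unfolding eventually_at_bot_linorder by auto
  have bdd: "bdd_below {x. u \<le> cdf N x}"
  proof (rule bdd_belowI)
    fix x assume "x \<in> {x. u \<le> cdf N x}"
    then show "N0 \<le> x" using N0[of x] by force
  qed
  have "Inf {x. u \<le> cdf N x} \<le> Inf {x. v \<le> cdf N x}"
    by (rule cInf_superset_mono[OF ne bdd]) (use uv in auto)
  then show ?thesis by (simp add: quantile_def)
qed

lemma inv_props:
  fixes k k' :: "real \<Rightarrow> real"
  assumes dk: "distortion k" and sm: "strict_mono_on {0..1} k"
    and dd: "\<forall>x\<in>{0<..<1}. (k has_real_derivative k' x) (at x) \<and> k' x > 0"
  defines "ki \<equiv> the_inv_into {0..1} k"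
  shows "\<And>y. 0 < y \<Longrightarrow> y < 1 \<Longrightarrow> 0 < ki y \<and> ki y < 1"
    and "\<And>y1 y2. 0 \<le> y1 \<Longrightarrow> y1 \<le> y2 \<Longrightarrow> y2 \<le> 1 \<Longrightarrow> ki y1 \<le> ki y2"
    and "((\<lambda>u. 1 - ki (1 - u)) \<longlongrightarrow> 0) (at_right 0)"
    and "\<And>y. 0 < y \<Longrightarrow> y < 1 \<Longrightarrow> (ki has_real_derivative inverse (k' (ki y))) (at y)"
proof -
  have cont: "continuous_on {0..1} k" and k01: "k ` {0..1} \<subseteq> {0..1}" and k0: "k 0 = 0" and k1: "k 1 = 1"
    using dk by (auto simp: distortion_def)
  have inj: "inj_on k {0..1}" using sm by (rule strict_mono_on_imp_inj_on)
  have img: "k ` {0..1} = {0..1}"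
  proof
    show "{0..1} \<subseteq> k ` {0..1}"
    proof
      fix y :: real assume "y \<in> {0..1}"
      then obtain x where "0 \<le> x" "x \<le> 1" "k x = y"
        using IVT'[of k 0 y 1] cont k0 k1 by auto
      then show "y \<in> k ` {0..1}" by auto
    qed
  qed (rule k01)
  have kki: "k (ki y) = y" if "y \<in> {0..1}" for y
    unfolding ki_def using f_the_inv_into_f[OF inj] img that by auto
  have kiin: "ki y \<in> {0..1}" if "y \<in> {0..1}" for y
    unfolding ki_def using the_inv_into_into[OF inj, of y "{0..1}"] img that by auto
  have kik: "ki (k x) = x" if "x \<in> {0..1}" for x
    unfolding ki_def using the_inv_into_f_f[OF inj that] .
  show int: "0 < ki y \<and> ki y < 1" if "0 < y" "y < 1" for y
  proof -
    have a: "ki y \<in> {0..1}" using kiin that by auto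
    have "ki y \<noteq> 0" using kki[of y] k0 that by auto
    moreover have "ki y \<noteq> 1" using kki[of y] k1 that by auto
    ultimately show ?thesis using a by auto
  qed
  show mono: "ki y1 \<le> ki y2" if "0 \<le> y1" "y1 \<le> y2" "y2 \<le> 1" for y1 y2
  proof (rule ccontr)
    assume "\<not> ki y1 \<le> ki y2"
    then have "k (ki y2) < k (ki y1)"
      using kiin[of y1] kiin[of y2] that by (intro strict_mono_onD[OF sm]) auto
    then show False using kki[of y1] kki[of y2] that by auto
  qed
  have cki: "continuous_on {0..1} ki"
    using continuous_on_inv[OF cont compact_Icc, of ki] kik img by auto
  have isc: "isCont ki y" if "0 < y" "y < 1" for y
    using continuous_on_interior[OF cki, of y] that by auto
  have "((\<lambda>u. ki (1 - u)) \<longlongrightarrow> ki (1 - 0)) (at_right 0)"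
  proof -
    have "((\<lambda>u. 1 - u) \<longlongrightarrow> 1 - 0) (at_right (0::real))"
      by (intro tendsto_intros)
    moreover have "\<forall>\<^sub>F u in at_right 0. (1::real) - u \<in> {0..1} \<and> 1 - u \<noteq> 1"
      unfolding eventually_at_right_field by (intro exI[of _ 1]) auto
    ultimately have "filterlim (\<lambda>u. 1 - u) (at 1 within {0..1}) (at_right (0::real))"
      unfolding filterlim_at by simp
    moreover have "(ki \<longlongrightarrow> ki 1) (at 1 within {0..1})"
      using cki unfolding continuous_on_def by auto
    ultimately show ?thesis by (simp add: filterlim_compose)
  qed
  then have "((\<lambda>u. 1 - ki (1 - u)) \<longlongrightarrow> 1 - ki 1) (at_right 0)"
    by (intro tendsto_intros) simp
  moreover have "ki 1 = 1" using kik[of 1] k1 by simp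
  ultimately show "((\<lambda>u. 1 - ki (1 - u)) \<longlongrightarrow> 0) (at_right 0)" by simp
  show "(ki has_real_derivative inverse (k' (ki y))) (at y)" if "0 < y" "y < 1" for y
  proof (rule DERIV_inverse_function[where a=0 and b=1])
    show "(k has_real_derivative k' (ki y)) (at (ki y))" using dd int[OF that] by auto
    show "k' (ki y) \<noteq> 0" using dd int[OF that] by force
    show "\<And>z. 0 < z \<Longrightarrow> z < 1 \<Longrightarrow> k (ki z) = z" using kki by auto
  qed (use that isc in auto)
qed

lemma Pk_props:
  fixes Q q k k' :: "real \<Rightarrow> real"
  assumes Qmono: "mono_on {0<..<1} Q" and Qlim: "(Q \<longlongrightarrow> 0) (at_right 0)"
    and Qd: "\<forall>u\<in>{0<..<1}. (Q has_real_derivative q u) (at u)"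
    and dk: "distortion k" and sm: "strict_mono_on {0..1} k"
    and dd: "\<forall>x\<in>{0<..<1}. (k has_real_derivative k' x) (at x) \<and> k' x > 0"
  defines "ki \<equiv> the_inv_into {0..1} k"
  shows "mono_on {0<..<1} (\<lambda>u. Q (1 - ki (1 - u)))"
    and "((\<lambda>u. Q (1 - ki (1 - u))) \<longlongrightarrow> 0) (at_right 0)"
    and "\<And>u. 0 < u \<Longrightarrow> u < 1 \<Longrightarrow> ((\<lambda>u. Q (1 - ki (1 - u))) has_real_derivative
            q (1 - ki (1 - u)) / k' (ki (1 - u))) (at u)"
proof -
  note ip = inv_props[OF dk sm dd, folded ki_def]
  show "mono_on {0<..<1} (\<lambda>u. Q (1 - ki (1 - u)))"
  proof (rule mono_onI)
    fix u v :: real assume uv: "u \<in> {0<..<1}" "v \<in> {0<..<1}" "u \<le> v"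
    have "ki (1 - v) \<le> ki (1 - u)" using uv by (intro ip(2)) auto
    moreover have "0 < ki (1 - v) \<and> ki (1 - v) < 1" "0 < ki (1 - u) \<and> ki (1 - u) < 1"
      using uv by (auto intro!: ip(1))
    ultimately show "Q (1 - ki (1 - u)) \<le> Q (1 - ki (1 - v))"
      by (intro mono_onD[OF Qmono]) auto
  qed
  have "filterlim (\<lambda>u. 1 - ki (1 - u)) (at_right 0) (at_right 0)"
  proof (rule tendsto_imp_filterlim_at_right[OF ip(3)])
    show "\<forall>\<^sub>F u in at_right 0. 0 < 1 - ki (1 - u)"
      unfolding eventually_at_right_field using ip(1) by (intro exI[of _ 1]) force
  qed
  then show "((\<lambda>u. Q (1 - ki (1 - u))) \<longlongrightarrow> 0) (at_right 0)"
    using filterlim_compose[OF Qlim] by blast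
  show "((\<lambda>u. Q (1 - ki (1 - u))) has_real_derivative
            q (1 - ki (1 - u)) / k' (ki (1 - u))) (at u)" if u: "0 < u" "u < 1" for u
  proof -
    have kin: "0 < ki (1 - u) \<and> ki (1 - u) < 1" using u by (intro ip(1)) auto
    have d1: "((\<lambda>u. 1 - u) has_real_derivative -1) (at u)"
      by (auto intro!: derivative_eq_intros)
    have d2: "((\<lambda>u. ki (1 - u)) has_real_derivative inverse (k' (ki (1 - u))) * -1) (at u)"
    proof -
      have "(ki has_real_derivative inverse (k' (ki (1 - u)))) (at (1 - u))" using u by (intro ip(4)) auto
      from DERIV_chain2[OF this d1] show ?thesis .
    qed
    have d3: "((\<lambda>u. 1 - ki (1 - u)) has_real_derivative 0 - inverse (k' (ki (1 - u))) * -1) (at u)"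
      by (intro DERIV_diff DERIV_const d2)
    have d4: "(Q has_real_derivative q (1 - ki (1 - u))) (at (1 - ki (1 - u)))"
      using Qd kin by auto
    show ?thesis using DERIV_chain2[OF d4 d3] by (simp add: divide_inverse)
  qed
qed



theorem theorem1:
  fixes M :: "'a measure" and X :: "'a \<Rightarrow> real"
    and h l h' l' g g' q :: "real \<Rightarrow> real"
  assumes "prob_space M"
    and "X \<in> borel_measurable M"
    and "AE x in M. 0 \<le> X x"
    and "absolutely_continuous lborel (distr M lborel X)"
    and "integrable M X" and "(\<integral>x. X x \<partial>M) \<noteq> 0"
    and "((quantile (cdf (distr M lborel X))) \<longlongrightarrow> 0) (at_right 0)"
    and "\<forall>u\<in>{0<..<1}. (quantile (cdf (distr M lborel X)) has_real_derivative q u) (at u)"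
    and "distortion h" and "distortion l"
    and "strict_mono_on {0..1} h" and "strict_mono_on {0..1} l"
    and "\<forall>x\<in>{0<..<1}. (h has_real_derivative h' x) (at x) \<and> h' x > 0"
    and "\<forall>x\<in>{0<..<1}. (l has_real_derivative l' x) (at x) \<and> l' x > 0"
    and "\<forall>x\<in>{0<..<1}. h x \<le> l x"
    and "set_integrable lborel {0..} (\<lambda>s. l (1 - cdf (distr M lborel X) s))"
    and "distorted_mean h (cdf (distr M lborel X)) < distorted_mean l (cdf (distr M lborel X))"
    and "\<forall>x\<in>{0<..<1}. (g has_real_derivative g' x) (at x)"
    and "set_integrable lborel {0<..<1}
           (\<lambda>u. g' u * quantile (cdf (distr M lborel X)) (1 - the_inv_into {0..1} h (1 - u)))"
    and "set_integrable lborel {0<..<1}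
           (\<lambda>u. g' u * quantile (cdf (distr M lborel X)) (1 - the_inv_into {0..1} l (1 - u)))"
  shows "(LBINT u:{0<..<1}.
            (q (1 - the_inv_into {0..1} l (1 - u)) / l' (the_inv_into {0..1} l (1 - u))
             - q (1 - the_inv_into {0..1} h (1 - u)) / h' (the_inv_into {0..1} h (1 - u)))
            * (Lim (at_left 1) g - g u))
       = (LBINT x:{0<..<1}. g' x *
            ((quantile (cdf (distr M lborel X)) (1 - the_inv_into {0..1} l (1 - x))
              - quantile (cdf (distr M lborel X)) (1 - the_inv_into {0..1} h (1 - x)))
             / (distorted_mean l (cdf (distr M lborel X)) - distorted_mean h (cdf (distr M lborel X)))))
         * (distorted_mean l (cdf (distr M lborel X)) - distorted_mean h (cdf (distr M lborel X)))"
  proof -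
  let ?F = "cdf (distr M lborel X)"
  let ?Q = "quantile ?F"
  define G where "G = Lim (at_left 1) g"
  define Dm where "Dm = distorted_mean l ?F - distorted_mean h ?F"
  have Dm: "Dm \<noteq> 0" using assms(17) by (simp add: Dm_def)
  interpret prob_space M by fact
  have rd: "real_distribution (distr M lborel X)"
    unfolding real_distribution_def real_distribution_axioms_def using assms(2)
    by (auto intro!: prob_space_distr)
  have Qmono: "mono_on {0<..<1} ?Q" by (intro mono_onI quantile_mono[OF rd]) auto
  have dg: "\<And>u. 0 < u \<Longrightarrow> u < 1 \<Longrightarrow> (g has_real_derivative g' u) (at u)" using assms(18) by auto
  note Ph = Pk_props[OF Qmono assms(7) assms(8) assms(9) assms(11) assms(13)]
  note Pl = Pk_props[OF Qmono assms(7) assms(8) assms(10) assms(12) assms(14)]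
  note ch = core[OF Ph(1) Ph(2) Ph(3) dg assms(19) G_def]
  note cl = core[OF Pl(1) Pl(2) Pl(3) dg assms(20) G_def]
  let ?pl = "\<lambda>u. q (1 - the_inv_into {0..1} l (1 - u)) / l' (the_inv_into {0..1} l (1 - u))"
  let ?ph = "\<lambda>u. q (1 - the_inv_into {0..1} h (1 - u)) / h' (the_inv_into {0..1} h (1 - u))"
  let ?Ql = "\<lambda>u. ?Q (1 - the_inv_into {0..1} l (1 - u))"
  let ?Qh = "\<lambda>u. ?Q (1 - the_inv_into {0..1} h (1 - u))"
  have "(LBINT u:{0<..<1}. (?pl u - ?ph u) * (G - g u))
      = (LBINT u:{0<..<1}. ?pl u * (G - g u) - ?ph u * (G - g u))"
    by (simp add: left_diff_distrib)
  also have "\<dots> = (LBINT u:{0<..<1}. ?pl u * (G - g u)) - (LBINT u:{0<..<1}. ?ph u * (G - g u))"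
    by (rule set_integral_diff(2)[OF cl(1) ch(1)])
  also have "\<dots> = (LBINT u:{0<..<1}. g' u * ?Ql u) - (LBINT u:{0<..<1}. g' u * ?Qh u)"
    using cl(2) ch(2) by simp
  also have "\<dots> = (LBINT u:{0<..<1}. g' u * ?Ql u - g' u * ?Qh u)"
    by (rule set_integral_diff(2)[OF assms(20) assms(19), symmetric])
  also have "\<dots> = (LBINT x:{0<..<1}. g' x * ((?Ql x - ?Qh x) / Dm)) * Dm"
  proof -
    have "(LBINT x:{0<..<1}. g' x * ((?Ql x - ?Qh x) / Dm)) = (LBINT x:{0<..<1}. (g' x * ?Ql x - g' x * ?Qh x) / Dm)"
      by (simp add: right_diff_distrib)
    also have "\<dots> = (LBINT x:{0<..<1}. g' x * ?Ql x - g' x * ?Qh x) / Dm"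
      by (rule set_integral_divide_zero)
    finally show ?thesis using Dm by simp
  qed
  finally show ?thesis unfolding G_def Dm_def .
qed

end
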